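(* For every integer $d\ge3$ there exists an exact-repair regenerating code of type $(n,k,d)=(d+1,d,d)$ with parameters $B=(d-1)(d+1)$, $\alpha=d$, $\beta=d-1$ (entropies measured in bits). For these parameters $B=B_{k-1}<B_k$ and $B=B_{k-1}<B_{k-2}$.
   Context: Fix integers $1\le k\le d\le n-1$. An exact-repair regenerating code of type $(n,k,d)$ with parameters $(B,\alpha,\beta)$ (nonnegative reals) is a collection of jointly distributed discrete random variables $M$, $W_j$ ($1\le j\le n$), $S_i^j$ ($1\le i,j\le n$, $i\neq j$) such that, with $H$ denoting Shannon entropy: $H(M)=B$; $H(W_j)=\alpha$ and $H(W_j\mid M)=0$ for all $j$; $H(M\mid W_J)=0$ for every $J\subseteq\{1,\dots,n\}$ with $|J|\ge k$; $H(S_i^j)=\beta$ and $H(S_i^j\mid W_i)=0$ for all $i\ne j$; and $H(W_j\mid S_I^j)=0$ for every $I\subseteq\{1,\dots,n\}\setminus\{j\}$ with $|I|\ge d$. Notation: for a set $J$, $W_J=(W_j)_{j\in J}$; for sets $I$, $S_I^j=(S_i^j)_{i\in I}$. For $0\le q\le k$, define $B_q=q\alpha+\binom{k-q}{2}\beta+(d+1-k)(k-q)\beta$. *)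

theory Defs
  imports "HOL-Probability.Probability"
begin

text \<open>Random variables are functions on the sample space of a discrete joint
distribution p (a pmf). Shannon entropy in bits, valued in ennreal
(so possibly infinite; all summands are nonnegative).\<close>

definition entropy2 :: "'w pmf \<Rightarrow> ('w \<Rightarrow> 'a) \<Rightarrow> ennreal" where
  "entropy2 p X =
     (let q = map_pmf X p in
      (\<Sum>\<^sub>\<infinity>x. ennreal (pmf q x * log 2 (1 / pmf q x))))"

definition cond_entropy2 :: "'w pmf \<Rightarrow> ('w \<Rightarrow> 'a) \<Rightarrow> ('w \<Rightarrow> 'b) \<Rightarrow> ennreal" where
  "cond_entropy2 p X Y =
     (let q = map_pmf (\<lambda>w. (X w, Y w)) p; r = map_pmf Y p in
      (\<Sum>\<^sub>\<infinity>(x, y). ennreal (pmf q (x, y) * log 2 (pmf r y / pmf q (x, y)))))"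

definition joint :: "('i \<Rightarrow> 'w \<Rightarrow> 'a) \<Rightarrow> 'i set \<Rightarrow> 'w \<Rightarrow> ('i \<Rightarrow> 'a)" where
  "joint V J = (\<lambda>w. restrict (\<lambda>j. V j w) J)"

text \<open>Exact-repair regenerating code of type (n,k,d) with parameters (B,alpha,beta).
Nodes are indexed by {1..n}; W j is the content of node j, S i j is the
repair message from node i to node j.\<close>
definition regenerating_code ::
  "nat \<Rightarrow> nat \<Rightarrow> nat \<Rightarrow> real \<Rightarrow> real \<Rightarrow> real \<Rightarrow> 'w pmf \<Rightarrow> ('w \<Rightarrow> 'a)
   \<Rightarrow> (nat \<Rightarrow> 'w \<Rightarrow> 'b) \<Rightarrow> (nat \<Rightarrow> nat \<Rightarrow> 'w \<Rightarrow> 'c) \<Rightarrow> bool" where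
  "regenerating_code n k d B \<alpha> \<beta> p M W S \<longleftrightarrow>
     1 \<le> k \<and> k \<le> d \<and> d \<le> n - 1 \<and> 0 \<le> B \<and> 0 \<le> \<alpha> \<and> 0 \<le> \<beta> \<and>
     entropy2 p M = ennreal B \<and>
     (\<forall>j\<in>{1..n}. entropy2 p (W j) = ennreal \<alpha> \<and> cond_entropy2 p (W j) M = 0) \<and>
     (\<forall>J\<subseteq>{1..n}. k \<le> card J \<longrightarrow> cond_entropy2 p M (joint W J) = 0) \<and>
     (\<forall>i\<in>{1..n}. \<forall>j\<in>{1..n}. i \<noteq> j \<longrightarrow>
        entropy2 p (S i j) = ennreal \<beta> \<and> cond_entropy2 p (S i j) (W i) = 0) \<and>
     (\<forall>j\<in>{1..n}. \<forall>I\<subseteq>{1..n} - {j}. d \<le> card I \<longrightarrow>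
        cond_entropy2 p (W j) (joint (\<lambda>i. S i j) I) = 0)"

definition Bq :: "nat \<Rightarrow> nat \<Rightarrow> real \<Rightarrow> real \<Rightarrow> nat \<Rightarrow> real" where
  "Bq k d \<alpha> \<beta> q = real q * \<alpha> + real ((k - q) choose 2) * \<beta>
                     + real (d + 1 - k) * real (k - q) * \<beta>"

end

theory Submission
  imports Defs "HOL-Library.Nat_Bijection"
begin

lemma entropy2_uniform:
  assumes "map_pmf X p = pmf_of_set S" "finite S" "S \<noteq> {}"
  shows "entropy2 p X = ennreal (log 2 (real (card S)))"
proof -
  let ?N = "real (card S)"
  have N: "?N > 0" using assms(2,3) by (simp add: card_gt_0_iff)
  let ?f = "\<lambda>x. ennreal (pmf (pmf_of_set S) x * log 2 (1 / pmf (pmf_of_set S) x))"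
  have "entropy2 p X = infsum ?f UNIV" unfolding entropy2_def Let_def assms(1) by simp
  also have "\<dots> = infsum ?f S"
    by (rule infsum_cong_neutral) (auto simp: assms(2,3) pmf_of_set)
  also have "\<dots> = sum ?f S" using assms(2) by (simp add: infsum_finite)
  also have "\<dots> = (\<Sum>x\<in>S. ennreal (1 / ?N * log 2 ?N))"
    by (rule sum.cong) (auto simp: assms(2,3) pmf_of_set)
  also have "\<dots> = ennreal (\<Sum>x\<in>S. (1 / ?N * log 2 ?N))"
    by (rule sum_ennreal) (use N in auto)
  also have "(\<Sum>x\<in>S. (1 / ?N * log 2 ?N)) = log 2 ?N" using N by simp
  finally show ?thesis .
qed

lemma cond_entropy2_det:
  assumes "\<And>w w'. w \<in> set_pmf p \<Longrightarrow> w' \<in> set_pmf p \<Longrightarrow> Y w = Y w' \<Longrightarrow> X w = X w'"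
  shows "cond_entropy2 p X Y = 0"
proof -
  let ?q = "map_pmf (\<lambda>w. (X w, Y w)) p" and ?r = "map_pmf Y p"
  have eq: "pmf ?q (x, y) = 0 \<or> pmf ?q (x, y) = pmf ?r y" for x y
  proof (cases "pmf ?q (x, y) = 0")
    case False
    then have "(x, y) \<in> set_pmf ?q" by (simp add: set_pmf_eq)
    then obtain w0 where w0: "w0 \<in> set_pmf p" "X w0 = x" "Y w0 = y" by auto
    have det: "\<And>w. w \<in> set_pmf p \<Longrightarrow> Y w = y \<Longrightarrow> X w = x"
      using assms w0 by metis
    have "{w. X w = x \<and> Y w = y} \<inter> set_pmf p = Y -` {y} \<inter> set_pmf p"
      using det by auto
    then have "measure_pmf.prob p ({w. X w = x \<and> Y w = y} \<inter> set_pmf p)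
        = measure_pmf.prob p (Y -` {y} \<inter> set_pmf p)" by simp
    then have "measure_pmf.prob p {w. X w = x \<and> Y w = y} = measure_pmf.prob p (Y -` {y})"
      by (simp add: measure_Int_set_pmf)
    moreover have "(\<lambda>w. (X w, Y w)) -` {(x, y)} = {w. X w = x \<and> Y w = y}" by auto
    ultimately show ?thesis by (simp add: pmf_map)
  qed simp
  have "(\<lambda>(x, y). ennreal (pmf ?q (x, y) * log 2 (pmf ?r y / pmf ?q (x, y)))) = (\<lambda>_. 0)"
  proof (rule ext, clarsimp)
    fix x y
    show "ennreal (pmf ?q (x, y) * log 2 (pmf ?r y / pmf ?q (x, y))) = 0"
      using eq[of x y] by (cases "pmf ?q (x, y) = 0") auto
  qed
  then show ?thesis unfolding cond_entropy2_def Let_def by simp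
qed

definition sd :: "'a set \<Rightarrow> 'a set \<Rightarrow> 'a set" where
  "sd A B = (A - B) \<union> (B - A)"

lemma map_pmf_toggle:
  fixes f :: "'a set \<Rightarrow> 'k set" and \<tau> :: "'k set \<Rightarrow> 'a set"
  assumes D: "finite D" and K: "finite K"
    and tau: "\<And>E. E \<subseteq> K \<Longrightarrow> \<tau> E \<subseteq> D"
    and fK: "\<And>A. A \<subseteq> D \<Longrightarrow> f A \<subseteq> K"
    and tog: "\<And>A E. A \<subseteq> D \<Longrightarrow> E \<subseteq> K \<Longrightarrow> f (sd A (\<tau> E)) = sd (f A) E"
  shows "map_pmf f (pmf_of_set (Pow D)) = pmf_of_set (Pow K)"
proof -
  define F where "F v = Pow D \<inter> f -` {v}" for v
  have le: "card (F v) \<le> card (F v')" if "v \<subseteq> K" "v' \<subseteq> K" for v v'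
  proof -
    let ?E = "sd v v'"
    have EK: "?E \<subseteq> K" using that by (auto simp: sd_def)
    have "inj_on (\<lambda>A. sd A (\<tau> ?E)) (F v)"
      by (rule inj_onI) (auto simp: sd_def)
    moreover have "(\<lambda>A. sd A (\<tau> ?E)) ` F v \<subseteq> F v'"
    proof
      fix B assume "B \<in> (\<lambda>A. sd A (\<tau> ?E)) ` F v"
      then obtain A where A: "A \<subseteq> D" "f A = v" "B = sd A (\<tau> ?E)" by (auto simp: F_def)
      have "B \<subseteq> D" using A tau[OF EK] by (auto simp: sd_def)
      moreover have "f B = v'" using tog[OF A(1) EK] A by (auto simp: sd_def)
      ultimately show "B \<in> F v'" by (simp add: F_def)
    qed
    moreover have "finite (F v')" using D by (simp add: F_def)
    ultimately show ?thesis by (rule card_inj_on_le)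
  qed
  define c where "c = card (F {})"
  have cF: "card (F v) = c" if "v \<subseteq> K" for v
    using le[OF that, of "{}"] le[OF _ that, of "{}"] by (simp add: c_def)
  have ne: "Pow D \<noteq> {}" by auto
  have fin: "finite (Pow D)" using D by simp
  let ?m = "map_pmf f (pmf_of_set (Pow D))"
  have pm: "pmf ?m v = real (card (F v)) / real (card (Pow D))" for v
    by (simp add: pmf_map measure_pmf_of_set[OF ne fin] F_def)
  have sub: "set_pmf ?m \<subseteq> Pow K" using fK fin ne by auto
  have "sum (pmf ?m) (Pow K) = 1" by (rule sum_pmf_eq_1) (use K sub in auto)
  moreover have "sum (pmf ?m) (Pow K) = (\<Sum>v\<in>Pow K. real c / real (card (Pow D)))"
    by (rule sum.cong) (auto simp del: Pow_iff simp add: pm cF)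
  ultimately have "(\<Sum>v\<in>Pow K. real c / real (card (Pow D))) = 1"
    by metis
  moreover have "(\<Sum>v\<in>Pow K. real c / real (card (Pow D))) = real (card (Pow K)) * (real c / real (card (Pow D)))"
    by (rule sum_constant)
  ultimately have "real (card (Pow K)) * (real c / real (card (Pow D))) = 1"
    by metis
  moreover have "real (card (Pow K)) > 0" using K by (simp add: card_Pow)
  moreover have "\<And>k y::real. k > 0 \<Longrightarrow> k * y = 1 \<Longrightarrow> y = 1 / k"
    by (simp add: field_simps)
  ultimately have cc: "real c / real (card (Pow D)) = 1 / real (card (Pow K))"
    by blast
  have pK: "pmf (pmf_of_set (Pow K)) v = indicator (Pow K) v / real (card (Pow K))" for v
    by (rule pmf_of_set) (use K in auto)
  show ?thesis
  proof (rule pmf_eqI)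
    fix v
    show "pmf ?m v = pmf (pmf_of_set (Pow K)) v"
    proof (cases "v \<subseteq> K")
      case True
      then show ?thesis using K by (simp add: pm cF cc pK)
    next
      case False
      then have "v \<notin> set_pmf ?m" using sub by auto
      then show ?thesis using K False by (simp add: set_pmf_eq pK)
    qed
  qed
qed


definition par :: "nat \<Rightarrow> nat" where "par l = (if l = 1 then 2 else 1)"
definition sig :: "nat \<Rightarrow> nat" where "sig l = (if l = 3 then 4 else 3)"
definition DG :: "nat \<Rightarrow> (nat \<times> nat) set" where
  "DG n = Sigma {1..n} (\<lambda>l. {1..n} - {l, par l})"
definition bb :: "(nat \<times> nat) set \<Rightarrow> nat \<Rightarrow> nat \<Rightarrow> bool" where
  "bb A l i = (if i = par l then odd (card {i'. (l, i') \<in> A}) else (l, i) \<in> A)"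
definition WW :: "nat \<Rightarrow> nat \<Rightarrow> (nat \<times> nat) set \<Rightarrow> nat set" where
  "WW n j A = {l \<in> {1..n}. l \<noteq> j \<and> bb A l j}"
definition tg :: "nat \<Rightarrow> nat \<Rightarrow> nat \<times> nat" where
  "tg j l = (if j = par l then (l, sig l) else (l, j))"

lemma finite_DG: "finite (DG n)"
  unfolding DG_def by auto

lemma par_props: "2 \<le> n \<Longrightarrow> l \<in> {1..n} \<Longrightarrow> par l \<in> {1..n} \<and> par l \<noteq> l"
  unfolding par_def by auto

lemma sig_props: "4 \<le> n \<Longrightarrow> l \<in> {1..n} \<Longrightarrow> sig l \<in> {1..n} \<and> sig l \<noteq> l \<and> sig l \<noteq> par l"
  unfolding par_def sig_def by auto

lemma card_DG:
  assumes "2 \<le> n" shows "card (DG n) = n * (n - 2)"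
proof -
  have "card (DG n) = (\<Sum>l\<in>{1..n}. card ({1..n} - {l, par l}))"
    unfolding DG_def by (rule card_SigmaI) auto
  also have "\<dots> = (\<Sum>l\<in>{1..n}. n - 2)"
  proof (rule sum.cong)
    fix l assume l: "l \<in> {1..n}"
    have "card ({1..n} - {l, par l}) = card {1..n} - card {l, par l}"
      by (rule card_Diff_subset) (use par_props[OF assms l] l in auto)
    also have "card {l, par l} = 2" using par_props[OF assms l] by auto
    finally show "card ({1..n} - {l, par l}) = n - 2" by simp
  qed simp
  finally show ?thesis by simp
qed

lemma odd_sd_single:
  assumes "finite X" shows "odd (card (sd X {s})) = (\<not> odd (card X))"
proof (cases "s \<in> X")
  case True
  then have e: "sd X {s} = X - {s}" by (auto simp: sd_def)
  have c: "card (X - {s}) = card X - 1" using assms True by (simp add: card_Diff_singleton)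
  have "card X \<noteq> 0" using True assms by auto
  then have "odd (card X - 1) = (\<not> odd (card X))" by presburger
  then show ?thesis using e c by simp
next
  case False
  then have "sd X {s} = insert s X" by (auto simp: sd_def)
  then show ?thesis using False assms by simp
qed

lemma tg_DG:
  assumes "4 \<le> n" "j \<in> {1..n}" "l \<in> {1..n}" "l \<noteq> j"
  shows "tg j l \<in> DG n"
  using sig_props[OF assms(1,3)] assms unfolding tg_def DG_def by auto

lemma fst_tg[simp]: "fst (tg j l) = l" unfolding tg_def by auto

lemma toggle_bb:
  assumes n: "4 \<le> n" and j: "j \<in> {1..n}" and A: "A \<subseteq> DG n"
    and E: "E \<subseteq> {1..n} - {j}" and l: "l \<in> {1..n}" "l \<noteq> j"
  shows "bb (sd A (tg j ` E)) l j = (bb A l j \<noteq> (l \<in> E))"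
proof -
  have memT: "(l', i) \<in> tg j ` E \<longleftrightarrow> l' \<in> E \<and> (l', i) = tg j l'" for l' i
  proof
    assume "(l', i) \<in> tg j ` E"
    then obtain x where x: "x \<in> E" "(l', i) = tg j x" by auto
    then have "fst (l', i) = fst (tg j x)" by simp
    then have "x = l'" by simp
    then show "l' \<in> E \<and> (l', i) = tg j l'" using x by simp
  next
    assume "l' \<in> E \<and> (l', i) = tg j l'"
    then show "(l', i) \<in> tg j ` E" by (metis image_eqI)
  qed
  show ?thesis
  proof (cases "j = par l")
    case True
    have tgl: "tg j l = (l, sig l)" using True by (simp add: tg_def)
    let ?X = "{i'. (l, i') \<in> A}"
    have finX: "finite ?X"
    proof -
      have "?X \<subseteq> snd ` A" by (force simp: image_iff)
      moreover have "finite A" using A finite_DG finite_subset by blast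
      ultimately show ?thesis using finite_subset by blast
    qed
    have set: "{i'. (l, i') \<in> sd A (tg j ` E)} = (if l \<in> E then sd ?X {sig l} else ?X)"
      using memT[of l] tgl by (auto simp: sd_def)
    show ?thesis
      using True set odd_sd_single[OF finX, of "sig l"] by (simp add: bb_def)
  next
    case False
    have tgl: "tg j l = (l, j)" using False by (simp add: tg_def)
    show ?thesis using False memT[of l j] tgl by (auto simp: bb_def sd_def)
  qed
qed

lemma toggle_W:
  assumes n: "4 \<le> n" and j: "j \<in> {1..n}" and A: "A \<subseteq> DG n"
    and E: "E \<subseteq> {1..n} - {j}"
  shows "WW n j (sd A (tg j ` E)) = sd (WW n j A) E"
proof (rule set_eqI)
  fix l
  show "l \<in> WW n j (sd A (tg j ` E)) \<longleftrightarrow> l \<in> sd (WW n j A) E"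
  proof (cases "l \<in> {1..n} \<and> l \<noteq> j")
    case True
    then show ?thesis using toggle_bb[OF n j A E, of l] unfolding WW_def sd_def by auto
  next
    case False
    then show ?thesis using E unfolding WW_def sd_def by auto
  qed
qed

lemma even_card_remove:
  assumes "finite T" "even (card T)"
  shows "odd (card (T - {m})) \<longleftrightarrow> m \<in> T"
proof (cases "m \<in> T")
  case True
  then have c: "card (T - {m}) = card T - 1" using assms(1) by (simp add: card_Diff_singleton)
  have "card T \<noteq> 0" using True assms(1) by auto
  then have "odd (card T - 1)" using assms(2) by presburger
  then show ?thesis using True c by simp
next
  case False
  then have "T - {m} = T" by auto
  then show ?thesis using False assms(2) by simp
qed

lemma parity_id:
  assumes n: "2 \<le> n" and A: "A \<subseteq> DG n" and l: "l \<in> {1..n}" and m: "m \<in> {1..n}" "m \<noteq> l"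
  shows "bb A l m \<longleftrightarrow> odd (card {i \<in> {1..n} - {l} - {m}. bb A l i})"
proof -
  define X where "X = {i'. (l, i') \<in> A}"
  define T where "T = {i \<in> {1..n} - {l}. bb A l i}"
  have Xsub: "X \<subseteq> {1..n} - {l, par l}" using A unfolding X_def DG_def by auto
  then have finX: "finite X" using finite_subset by blast
  have pl: "par l \<in> {1..n}" "par l \<noteq> l" using par_props[OF n l] by auto
  have bbX: "bb A l i = (if i = par l then odd (card X) else i \<in> X)" for i
    unfolding bb_def X_def by simp
  have ev: "even (card T)"
  proof (cases "odd (card X)")
    case True
    have "T = insert (par l) X" using Xsub pl True unfolding T_def bbX by auto
    moreover have "par l \<notin> X" using Xsub by auto
    ultimately have "card T = Suc (card X)" using finX by simp
    then show ?thesis using True by simp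
  next
    case False
    have "T = X" using Xsub pl False unfolding T_def bbX by auto
    then show ?thesis using False by simp
  qed
  have finT: "finite T" unfolding T_def by simp
  have "{i \<in> {1..n} - {l} - {m}. bb A l i} = T - {m}" unfolding T_def by auto
  moreover have "bb A l m \<longleftrightarrow> m \<in> T" using m unfolding T_def by auto
  ultimately show ?thesis using even_card_remove[OF finT ev, of m] by simp
qed

lemma recover:
  assumes n: "2 \<le> n" and J: "J \<subseteq> {1..n}" "n - 1 \<le> card J"
    and A: "A \<subseteq> DG n" and A': "A' \<subseteq> DG n"
    and eq: "\<And>j. j \<in> J \<Longrightarrow> WW n j A = WW n j A'"
  shows "A = A'"
proof -
  have inJ: "bb A l i = bb A' l i" if "l \<in> {1..n}" "i \<in> {1..n}" "i \<noteq> l" "i \<in> J" for l i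
  proof -
    have "l \<in> WW n i A \<longleftrightarrow> l \<in> WW n i A'" using eq[OF that(4)] by simp
    then show ?thesis using that by (simp add: WW_def)
  qed
  have others: "i' \<in> J" if "i \<notin> J" "i \<in> {1..n}" "i' \<in> {1..n}" "i' \<noteq> i" for i i'
  proof (rule ccontr)
    assume "i' \<notin> J"
    then have "J \<subseteq> {1..n} - {i, i'}" using J that by auto
    then have "card J \<le> card ({1..n} - {i, i'})" by (intro card_mono) auto
    also have "\<dots> = n - 2" using that by (subst card_Diff_subset) auto
    finally show False using J n by linarith
  qed
  have all: "bb A l i = bb A' l i" if "l \<in> {1..n}" "i \<in> {1..n}" "i \<noteq> l" for l i
  proof (cases "i \<in> J")
    case True then show ?thesis using inJ that by blast
  next
    case False
    have "{i' \<in> {1..n} - {l} - {i}. bb A l i'} = {i' \<in> {1..n} - {l} - {i}. bb A' l i'}"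
      using inJ others[OF False that(2)] that by auto
    then show ?thesis using parity_id[OF n A that(1,2,3)] parity_id[OF n A' that(1,2,3)] by simp
  qed
  show ?thesis
  proof (rule set_eqI)
    fix x :: "nat \<times> nat"
    show "x \<in> A \<longleftrightarrow> x \<in> A'"
    proof (cases "x \<in> DG n")
      case True
      then obtain l i where x0: "x = (l, i)" "l \<in> {1..n}" "i \<in> {1..n} - {l, par l}"
        unfolding DG_def by blast
      then have x: "x = (l, i)" "l \<in> {1..n}" "i \<in> {1..n}" "i \<noteq> l" "i \<noteq> par l"
        by auto
      then show ?thesis using all[OF x(2,3,4)] by (simp add: bb_def)
    next
      case False then show ?thesis using A A' by auto
    qed
  qed
qed

lemma repair:
  assumes n: "2 \<le> n" and j: "j \<in> {1..n}"
    and A: "A \<subseteq> DG n" and A': "A' \<subseteq> DG n"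
    and eq: "\<And>i. i \<in> {1..n} - {j} \<Longrightarrow> WW n i A - {j} = WW n i A' - {j}"
  shows "WW n j A = WW n j A'"
proof -
  have "bb A l j = bb A' l j" if l: "l \<in> {1..n}" "l \<noteq> j" for l
  proof -
    have "bb A l i = bb A' l i" if "i \<in> {1..n} - {l} - {j}" for i
    proof -
      have "l \<in> WW n i A - {j} \<longleftrightarrow> l \<in> WW n i A' - {j}" using eq that by auto
      then show ?thesis using that l by (simp add: WW_def)
    qed
    then have "{i \<in> {1..n} - {l} - {j}. bb A l i} = {i \<in> {1..n} - {l} - {j}. bb A' l i}"
      by auto
    then show ?thesis using parity_id[OF n A l(1) j] parity_id[OF n A' l(1) j] l by simp
  qed
  then show ?thesis unfolding WW_def by auto
qed


lemma map_W:
  assumes n: "4 \<le> n" and j: "j \<in> {1..n}"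
  shows "map_pmf (WW n j) (pmf_of_set (Pow (DG n))) = pmf_of_set (Pow ({1..n} - {j}))"
proof (rule map_pmf_toggle[where \<tau> = "\<lambda>E. tg j ` E"])
  show "finite (DG n)" by (rule finite_DG)
  show "finite ({1..n} - {j})" by simp
  show "tg j ` E \<subseteq> DG n" if "E \<subseteq> {1..n} - {j}" for E
  proof (rule image_subsetI)
    fix l assume "l \<in> E"
    then have "l \<in> {1..n}" "l \<noteq> j" using that by auto
    then show "tg j l \<in> DG n" by (rule tg_DG[OF n j])
  qed
  show "WW n j A \<subseteq> {1..n} - {j}" for A unfolding WW_def by auto
  show "WW n j (sd A (tg j ` E)) = sd (WW n j A) E" if "A \<subseteq> DG n" "E \<subseteq> {1..n} - {j}" for A E
    by (rule toggle_W[OF n j that])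
qed

lemma map_S:
  assumes n: "4 \<le> n" and i: "i \<in> {1..n}" and j: "j \<in> {1..n}" and ij: "i \<noteq> j"
  shows "map_pmf (\<lambda>A. WW n i A - {j}) (pmf_of_set (Pow (DG n))) = pmf_of_set (Pow ({1..n} - {i, j}))"
proof (rule map_pmf_toggle[where \<tau> = "\<lambda>E. tg i ` E"])
  show "finite (DG n)" by (rule finite_DG)
  show "finite ({1..n} - {i, j})" by simp
  show "tg i ` E \<subseteq> DG n" if "E \<subseteq> {1..n} - {i, j}" for E
  proof (rule image_subsetI)
    fix l assume "l \<in> E"
    then have "l \<in> {1..n}" "l \<noteq> i" using that by auto
    then show "tg i l \<in> DG n" by (rule tg_DG[OF n i])
  qed
  show "WW n i A - {j} \<subseteq> {1..n} - {i, j}" for A unfolding WW_def by auto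
  show "WW n i (sd A (tg i ` E)) - {j} = sd (WW n i A - {j}) E"
    if "A \<subseteq> DG n" "E \<subseteq> {1..n} - {i, j}" for A E
  proof -
    have "E \<subseteq> {1..n} - {i}" using that by auto
    then have "WW n i (sd A (tg i ` E)) = sd (WW n i A) E" by (rule toggle_W[OF n i that(1)])
    then show ?thesis using that by (auto simp: sd_def)
  qed
qed

lemma se_inj: "finite X \<Longrightarrow> finite Y \<Longrightarrow> set_encode X = set_encode Y \<Longrightarrow> X = Y"
  using inj_on_set_encode by (auto dest: inj_onD)

lemma joint_eq: "joint V J w = joint V J w' \<Longrightarrow> j \<in> J \<Longrightarrow> V j w = V j w'"
  unfolding joint_def by (metis restrict_apply')

lemma log2_pow: "log 2 (real ((2::nat) ^ m)) = real m"
  by (simp add: log_nat_power)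

lemma card_Pow_image:
  assumes "finite K" "inj_on f (Pow K)"
  shows "card (f ` Pow K) = 2 ^ card K"
  using assms by (simp add: card_image card_Pow)

lemma finite_WW: "finite (WW n j A)" unfolding WW_def by simp

lemma code_exists:
  fixes d :: nat
  assumes d: "3 \<le> d"
  shows "\<exists>(p :: nat pmf) (M :: nat \<Rightarrow> nat) (W :: nat \<Rightarrow> nat \<Rightarrow> nat)
            (S :: nat \<Rightarrow> nat \<Rightarrow> nat \<Rightarrow> nat).
            regenerating_code (d + 1) d d ((real d - 1) * (real d + 1)) (real d) (real d - 1)
              p M W S"
proof -
  define n where "n = d + 1"
  have n: "4 \<le> n" using d n_def by simp
  define \<Omega> where "\<Omega> = Pow (DG n)"
  define e :: "(nat \<times> nat) set \<Rightarrow> nat" where "e A = set_encode (prod_encode ` A)" for A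
  have finO: "finite \<Omega>" "\<Omega> \<noteq> {}" unfolding \<Omega>_def using finite_DG by auto
  have injE: "inj_on e \<Omega>"
  proof (rule inj_onI)
    fix A B assume AB: "A \<in> \<Omega>" "B \<in> \<Omega>" "e A = e B"
    have fA: "finite A" "finite B" using AB finite_DG unfolding \<Omega>_def by (auto intro: finite_subset)
    have "prod_encode ` A = prod_encode ` B"
      by (rule se_inj) (use fA AB(3) in \<open>auto simp: e_def\<close>)
    then show "A = B" using inj_prod_encode by (simp add: inj_image_eq_iff)
  qed
  define P0 where "P0 = pmf_of_set \<Omega>"
  define p where "p = map_pmf e P0"
  define dec where "dec = inv_into \<Omega> e"
  have dec_e: "dec (e A) = A" if "A \<in> \<Omega>" for A
    unfolding dec_def by (rule inv_into_f_f[OF injE that])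
  have setp: "set_pmf p = e ` \<Omega>" unfolding p_def P0_def set_map_pmf set_pmf_of_set[OF finO(2,1)] ..
  have mapdec: "map_pmf (\<lambda>w. g (dec w)) p = map_pmf g P0" for g :: "(nat \<times> nat) set \<Rightarrow> nat"
  proof -
    have "map_pmf (\<lambda>w. g (dec w)) p = map_pmf (\<lambda>A. g (dec (e A))) P0"
      unfolding p_def by (simp add: map_pmf_comp)
    also have "\<dots> = map_pmf g P0"
      by (rule map_pmf_cong) (use dec_e finO in \<open>auto simp: P0_def\<close>)
    finally show ?thesis .
  qed
  define M :: "nat \<Rightarrow> nat" where "M w = w" for w
  define W :: "nat \<Rightarrow> nat \<Rightarrow> nat" where "W j w = set_encode (WW n j (dec w))" for j w
  define S :: "nat \<Rightarrow> nat \<Rightarrow> nat \<Rightarrow> nat" where "S i j w = set_encode (WW n i (dec w) - {j})" for i j w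
  have inj_se: "inj_on set_encode (Pow K)" if "finite K" for K :: "nat set"
    by (rule inj_on_subset[OF inj_on_set_encode]) (use that in \<open>auto intro: finite_subset\<close>)
  have cardDG: "card (DG n) = (d + 1) * (d - 1)" using card_DG[of n] n n_def by simp
  have HM: "entropy2 p M = ennreal ((real d - 1) * (real d + 1))"
  proof -
    have "map_pmf M p = pmf_of_set (e ` \<Omega>)"
      unfolding M_def p_def P0_def using map_pmf_of_set_inj[OF injE finO(2,1)] by simp
    then have "entropy2 p M = ennreal (log 2 (real (card (e ` \<Omega>))))"
      by (rule entropy2_uniform) (use finO in auto)
    also have "card (e ` \<Omega>) = 2 ^ card (DG n)"
      using card_image[OF injE] unfolding \<Omega>_def by (simp add: card_Pow finite_DG)
    also have "log 2 (real ((2::nat) ^ card (DG n))) = real (card (DG n))" by (rule log2_pow)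
    also have "real (card (DG n)) = (real d - 1) * (real d + 1)"
      using cardDG d by (simp add: of_nat_diff algebra_simps)
    finally show ?thesis .
  qed
  have HW: "entropy2 p (W j) = ennreal (real d)" if j: "j \<in> {1..n}" for j
  proof -
    let ?K = "{1..n} - {j}"
    have "map_pmf (W j) p = map_pmf set_encode (map_pmf (WW n j) P0)"
      unfolding W_def using mapdec[of "\<lambda>A. set_encode (WW n j A)"] by (simp add: map_pmf_comp)
    also have "\<dots> = pmf_of_set (set_encode ` Pow ?K)"
      unfolding P0_def \<Omega>_def map_W[OF n j]
      by (rule map_pmf_of_set_inj) (auto intro: inj_se)
    finally have "entropy2 p (W j) = ennreal (log 2 (real (card (set_encode ` Pow ?K))))"
      by (rule entropy2_uniform) auto
    also have "card (set_encode ` Pow ?K) = 2 ^ card ?K"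
      by (rule card_Pow_image) (auto intro: inj_se)
    also have "log 2 (real ((2::nat) ^ card ?K)) = real (card ?K)" by (rule log2_pow)
    also have "card ?K = d" using j n_def by simp
    finally show ?thesis .
  qed
  have HS: "entropy2 p (S i j) = ennreal (real d - 1)"
    if i: "i \<in> {1..n}" and j: "j \<in> {1..n}" and ij: "i \<noteq> j" for i j
  proof -
    let ?K = "{1..n} - {i, j}"
    have "map_pmf (S i j) p = map_pmf set_encode (map_pmf (\<lambda>A. WW n i A - {j}) P0)"
      unfolding S_def using mapdec[of "\<lambda>A. set_encode (WW n i A - {j})"] by (simp add: map_pmf_comp)
    also have "\<dots> = pmf_of_set (set_encode ` Pow ?K)"
      unfolding P0_def \<Omega>_def map_S[OF n i j ij]
      by (rule map_pmf_of_set_inj) (auto intro: inj_se)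
    finally have "entropy2 p (S i j) = ennreal (log 2 (real (card (set_encode ` Pow ?K))))"
      by (rule entropy2_uniform) auto
    also have "card (set_encode ` Pow ?K) = 2 ^ card ?K"
      by (rule card_Pow_image) (auto intro: inj_se)
    also have "log 2 (real ((2::nat) ^ card ?K)) = real (card ?K)" by (rule log2_pow)
    also have "card ?K = d - 1"
    proof -
      have "card ?K = card {1..n} - card {i, j}" using i j by (intro card_Diff_subset) auto
      then show ?thesis using ij n_def by simp
    qed
    also have "real (d - 1) = real d - 1" using d by (simp add: of_nat_diff)
    finally show ?thesis .
  qed
  have sup: "\<exists>A \<in> \<Omega>. w = e A" if "w \<in> set_pmf p" for w using that setp by auto
  have OmDG: "A \<subseteq> DG n" if "A \<in> \<Omega>" for A using that unfolding \<Omega>_def by auto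
  have C1: "cond_entropy2 p (W j) M = 0" for j
    by (rule cond_entropy2_det) (simp add: M_def)
  have C2: "cond_entropy2 p M (joint W J) = 0" if J: "J \<subseteq> {1..n}" "d \<le> card J" for J
  proof (rule cond_entropy2_det)
    fix w w' assume w: "w \<in> set_pmf p" "w' \<in> set_pmf p" and eq: "joint W J w = joint W J w'"
    obtain A A' where A: "A \<in> \<Omega>" "w = e A" "A' \<in> \<Omega>" "w' = e A'" using sup w by metis
    have "WW n j A = WW n j A'" if "j \<in> J" for j
    proof -
      have "W j w = W j w'" using joint_eq[OF eq that] .
      then have "set_encode (WW n j A) = set_encode (WW n j A')" using A dec_e unfolding W_def by simp
      then show ?thesis by (rule se_inj[OF finite_WW finite_WW])
    qed
    then have "A = A'" using recover[of n J A A'] J n n_def OmDG A by auto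
    then show "M w = M w'" using A by (simp add: M_def)
  qed
  have C3: "cond_entropy2 p (S i j) (W i) = 0" for i j
  proof (rule cond_entropy2_det)
    fix w w' assume w: "w \<in> set_pmf p" "w' \<in> set_pmf p" and eq: "W i w = W i w'"
    have "set_encode (WW n i (dec w)) = set_encode (WW n i (dec w'))" using eq unfolding W_def by simp
    then have "WW n i (dec w) = WW n i (dec w')" by (rule se_inj[OF finite_WW finite_WW])
    then show "S i j w = S i j w'" unfolding S_def by simp
  qed
  have C4: "cond_entropy2 p (W j) (joint (\<lambda>i. S i j) I) = 0"
    if j: "j \<in> {1..n}" and I: "I \<subseteq> {1..n} - {j}" "d \<le> card I" for j I
  proof (rule cond_entropy2_det)
    have cK: "card ({1..n} - {j}) = d" using j n_def by simp
    have "card I \<le> card ({1..n} - {j})" by (rule card_mono) (use I in auto)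
    then have IK: "I = {1..n} - {j}" using I cK by (intro card_subset_eq) auto
    fix w w' assume w: "w \<in> set_pmf p" "w' \<in> set_pmf p" and eq: "joint (\<lambda>i. S i j) I w = joint (\<lambda>i. S i j) I w'"
    obtain A A' where A: "A \<in> \<Omega>" "w = e A" "A' \<in> \<Omega>" "w' = e A'" using sup w by metis
    have "WW n i A - {j} = WW n i A' - {j}" if "i \<in> {1..n} - {j}" for i
    proof -
      have "S i j w = S i j w'" using joint_eq[OF eq, of i] that IK by simp
      then have "set_encode (WW n i A - {j}) = set_encode (WW n i A' - {j})" using A dec_e unfolding S_def by simp
      then show ?thesis by (rule se_inj[OF finite_Diff[OF finite_WW] finite_Diff[OF finite_WW]])
    qed
    then have "WW n j A = WW n j A'" using repair[of n j A A'] j n OmDG A by auto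
    then show "W j w = W j w'" using A dec_e unfolding W_def by simp
  qed
  have "regenerating_code (d + 1) d d ((real d - 1) * (real d + 1)) (real d) (real d - 1) p M W S"
    unfolding regenerating_code_def n_def[symmetric]
  proof (intro conjI ballI allI impI)
    show "1 \<le> d" "d \<le> d" "d \<le> n - 1" using d n_def by auto
    show "0 \<le> (real d - 1) * (real d + 1)" "0 \<le> real d" "0 \<le> real d - 1" using d by auto
    show "entropy2 p M = ennreal ((real d - 1) * (real d + 1))" by (rule HM)
    show "entropy2 p (W j) = ennreal (real d)" if "j \<in> {1..n}" for j using HW that by blast
    show "cond_entropy2 p (W j) M = 0" for j by (rule C1)
    show "cond_entropy2 p M (joint W J) = 0" if "J \<subseteq> {1..n}" "d \<le> card J" for J
      using C2 that by blast
    show "entropy2 p (S i j) = ennreal (real d - 1)" if "i \<in> {1..n}" "j \<in> {1..n}" "i \<noteq> j" for i j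
      using HS that by blast
    show "cond_entropy2 p (S i j) (W i) = 0" for i j by (rule C3)
    show "cond_entropy2 p (W j) (joint (\<lambda>i. S i j) I) = 0"
      if "j \<in> {1..n}" "I \<subseteq> {1..n} - {j}" "d \<le> card I" for j I
      using C4 that by blast
  qed
  then show ?thesis by blast
qed

theorem mainTheorem8:
  fixes d :: nat
  assumes "3 \<le> d"
  shows "(\<exists>(p :: nat pmf) (M :: nat \<Rightarrow> nat) (W :: nat \<Rightarrow> nat \<Rightarrow> nat)
            (S :: nat \<Rightarrow> nat \<Rightarrow> nat \<Rightarrow> nat).
            regenerating_code (d + 1) d d ((real d - 1) * (real d + 1)) (real d) (real d - 1)
              p M W S)
       \<and> (real d - 1) * (real d + 1) = Bq d d (real d) (real d - 1) (d - 1)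
       \<and> Bq d d (real d) (real d - 1) (d - 1) < Bq d d (real d) (real d - 1) d
       \<and> Bq d d (real d) (real d - 1) (d - 1) < Bq d d (real d) (real d - 1) (d - 2)"
proof -
  have h1: "d - (d - 1) = 1" "d + 1 - d = 1" "d - (d - 2) = 2" using assms by auto
  have h2: "real (d - 1) = real d - 1" "real (d - 2) = real d - 2" using assms by (auto simp: of_nat_diff)
  have b1: "Bq d d (real d) (real d - 1) (d - 1) = (real d - 1) * (real d + 1)"
    unfolding Bq_def h1 h2 by (simp add: algebra_simps)
  have b2: "Bq d d (real d) (real d - 1) d = real d * real d"
    unfolding Bq_def by simp
  have b3: "Bq d d (real d) (real d - 1) (d - 2) = (real d - 2) * real d + 3 * (real d - 1)"
    unfolding Bq_def h1 h2 by (simp add: algebra_simps)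
  have r: "real d \<ge> 3" using assms by simp
  show ?thesis using code_exists[OF assms] b1 b2 b3 r by (simp add: algebra_simps)
qed

end
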